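(* Let $(R,+,0,\times,1,\leq)$ be a partially ordered unitary (nonassociative) ring. For $x \in R$ define $x^{\to 0} = 1$, $x^{\to n+1} = x\, x^{\to n}$, and $x^{\leftarrow 0} = 1$, $x^{\leftarrow n+1} = x^{\leftarrow n} x$. Suppose that: (1) $1 \geq 0$; (2) $R$ is monotone $\sigma$-complete; (3) every $x \in\, ]0,1]$ has a right-sup-almost-inverse; (4) every $x \in\, ]0,1]$ has a left-sup-almost-inverse; (5) for every $x \in [0,1[$, $\inf_{n} x^{\to n} = 0$; (6) for every $x \in [0,1[$, $\inf_{n} x^{\leftarrow n} = 0$; (7) for every $x \in\, ]0,1[$, if $x$ has a left inverse $x_L^{-1}$ and a right inverse $x_R^{-1}$ then $x_L^{-1} = x_R^{-1}$. Then every $x \in\, ]0,1]$ is invertible, with inverse $\sum_{n \in \mathbb{N}} (1-x)^{\leftarrow n} := \sup_n \sum_{k=0}^n (1-x)^{\leftarrow k}$ (which equals $\sum_{n\in\mathbb{N}}(1-x)^{\to n} := \sup_n \sum_{k=0}^n (1-x)^{\to k}$).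
   Context: Rings are not assumed associative or commutative: a ring is an abelian group $(R,+,0)$ with a biadditive multiplication; unitary means there is a two-sided multiplicative unit $1$. A partially ordered ring is a ring with a partial order $\leq$ such that $y \geq z \Rightarrow x+y \geq x+z$ and $x \geq 0, y \geq 0 \Rightarrow xy \geq 0$. Write $x<y$ for $x \le y$, $x\ne y$; intervals such as $]0,1]$, $[0,1[$, $]0,1[$ are defined with respect to $\leq$. A poset is monotone $\sigma$-complete if every increasing sequence that is bounded above has a supremum. An element $x > 0$ has a right-sup-almost-inverse if there is $y > 0$ with $xy \geq 1$, and a left-sup-almost-inverse if there is $y > 0$ with $yx \geq 1$. A left (right) inverse of $x$ is $y$ with $yx = 1$ ($xy = 1$); $x$ is invertible if it has a two-sided inverse. *)

theory Defs
  imports Main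
begin

fun rpow :: "'a::{times,one} \<Rightarrow> nat \<Rightarrow> 'a" where
  "rpow x 0 = 1"
| "rpow x (Suc n) = x * rpow x n"

fun lpow :: "'a::{times,one} \<Rightarrow> nat \<Rightarrow> 'a" where
  "lpow x 0 = 1"
| "lpow x (Suc n) = lpow x n * x"

definition is_lub :: "'a::order set \<Rightarrow> 'a \<Rightarrow> bool" where
  "is_lub S s \<longleftrightarrow> (\<forall>x\<in>S. x \<le> s) \<and> (\<forall>u. (\<forall>x\<in>S. x \<le> u) \<longrightarrow> s \<le> u)"

definition is_glb :: "'a::order set \<Rightarrow> 'a \<Rightarrow> bool" where
  "is_glb S s \<longleftrightarrow> (\<forall>x\<in>S. s \<le> x) \<and> (\<forall>u. (\<forall>x\<in>S. u \<le> x) \<longrightarrow> u \<le> s)"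

definition mono_sigma_complete :: "'a::order itself \<Rightarrow> bool" where
  "mono_sigma_complete _ \<longleftrightarrow>
     (\<forall>f :: nat \<Rightarrow> 'a. (\<forall>n. f n \<le> f (Suc n)) \<and> (\<exists>u. \<forall>n. f n \<le> u)
        \<longrightarrow> (\<exists>s. is_lub (range f) s))"

definition po_unitary_ring :: "'a::{ab_group_add,times,one,order} itself \<Rightarrow> bool" where
  "po_unitary_ring _ \<longleftrightarrow>
     (\<forall>x y z :: 'a. x * (y + z) = x * y + x * z) \<and>
     (\<forall>x y z :: 'a. (y + z) * x = y * x + z * x) \<and>
     (\<forall>x :: 'a. 1 * x = x \<and> x * 1 = x) \<and>
     (\<forall>x y z :: 'a. z \<le> y \<longrightarrow> x + z \<le> x + y) \<and>
     (\<forall>x y :: 'a. 0 \<le> x \<longrightarrow> 0 \<le> y \<longrightarrow> 0 \<le> x * y)"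

definition has_right_sup_almost_inverse :: "'a::{times,one,zero,order} \<Rightarrow> bool" where
  "has_right_sup_almost_inverse x \<longleftrightarrow> (\<exists>y. 0 < y \<and> 1 \<le> x * y)"

definition has_left_sup_almost_inverse :: "'a::{times,one,zero,order} \<Rightarrow> bool" where
  "has_left_sup_almost_inverse x \<longleftrightarrow> (\<exists>y. 0 < y \<and> 1 \<le> y * x)"

end

theory Submission
  imports Defs
begin

locale por =
  assumes ring: "po_unitary_ring TYPE('a::{ab_group_add,times,one,order})"
    and h1: "(0::'a) \<le> 1"
begin

lemma distL: "(x::'a) * (y + z) = x * y + x * z"
  using ring unfolding po_unitary_ring_def by blast
lemma distR: "((y::'a) + z) * x = y * x + z * x"
  using ring unfolding po_unitary_ring_def by blast
lemma one_l[simp]: "1 * (x::'a) = x"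
  using ring unfolding po_unitary_ring_def by blast
lemma one_r[simp]: "(x::'a) * 1 = x"
  using ring unfolding po_unitary_ring_def by blast
lemma addmono: "(z::'a) \<le> y \<Longrightarrow> x + z \<le> x + y"
  using ring unfolding po_unitary_ring_def by blast
lemma pos: "0 \<le> (x::'a) \<Longrightarrow> 0 \<le> y \<Longrightarrow> 0 \<le> x * y"
  using ring unfolding po_unitary_ring_def by blast

lemma zeroR[simp]: "(x::'a) * 0 = 0"
  using distL[of x 0 0] by simp
lemma zeroL[simp]: "0 * (x::'a) = 0"
  using distR[of 0 0 x] by simp
lemma diffL: "(x::'a) * (y - z) = x * y - x * z"
  using distL[of x "y - z" z] by (simp add: algebra_simps)
lemma diffR: "((y::'a) - z) * x = y * x - z * x"
  using distR[of "y - z" z x] by (simp add: algebra_simps)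

lemma le_iff: "(a::'a) \<le> b \<longleftrightarrow> 0 \<le> b - a"
proof
  assume "a \<le> b"
  then have "-a + a \<le> -a + b" by (rule addmono)
  then show "0 \<le> b - a" by simp
next
  assume "0 \<le> b - a"
  then have "a + 0 \<le> a + (b - a)" by (rule addmono)
  then show "a \<le> b" by simp
qed

lemma add_mono2: "(a::'a) \<le> b \<Longrightarrow> c \<le> d \<Longrightarrow> a + c \<le> b + d"
proof -
  assume "a \<le> b" "c \<le> d"
  have "c + a \<le> c + b" using addmono \<open>a \<le> b\<close> by blast
  moreover have "b + c \<le> b + d" using addmono \<open>c \<le> d\<close> by blast
  ultimately show ?thesis by (simp add: add.commute)
qed

lemma mult_lmono: "0 \<le> (x::'a) \<Longrightarrow> a \<le> b \<Longrightarrow> x * a \<le> x * b"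
proof -
  assume "0 \<le> x" "a \<le> b"
  then have "0 \<le> x * (b - a)" using pos le_iff by blast
  then show ?thesis unfolding diffL using le_iff[of "x*a" "x*b"] by simp
qed
lemma mult_rmono: "0 \<le> (x::'a) \<Longrightarrow> a \<le> b \<Longrightarrow> a * x \<le> b * x"
proof -
  assume "0 \<le> x" "a \<le> b"
  then have "0 \<le> (b - a) * x" using pos le_iff by blast
  then show ?thesis unfolding diffR using le_iff[of "a*x" "b*x"] by simp
qed

lemma sumR: "(\<Sum>k\<le>(n::nat). f k) * (y::'a) = (\<Sum>k\<le>n. f k * y)"
  by (induction n) (simp_all add: distR)
lemma sumL: "(y::'a) * (\<Sum>k\<le>(n::nat). f k) = (\<Sum>k\<le>n. y * f k)"
  by (induction n) (simp_all add: distL)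

lemma lpow_nonneg: "0 \<le> (y::'a) \<Longrightarrow> 0 \<le> lpow y k"
  by (induction k) (simp_all add: h1 pos)
lemma rpow_nonneg: "0 \<le> (y::'a) \<Longrightarrow> 0 \<le> rpow y k"
  by (induction k) (simp_all add: h1 pos)

lemma left_part:
  fixes x :: 'a
  assumes h2: "mono_sigma_complete TYPE('a)"
    and x0: "0 \<le> x" and x1: "x \<le> 1"
    and glb: "is_glb (range (lpow (1 - x))) 0"
    and z: "0 < z" "1 \<le> z * x"
  shows "\<exists>s. is_lub (range (\<lambda>n. \<Sum>k\<le>n. lpow (1 - x) k)) s \<and> s * x = 1"
proof -
  define y where "y = 1 - x"
  have xy: "x = 1 - y" unfolding y_def by simp
  have y0: "0 \<le> y" using x1 le_iff unfolding y_def by blast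
  define S where "S n = (\<Sum>k\<le>n. lpow y k)" for n
  have S0: "S 0 = 1" unfolding S_def by simp
  have Ssuc: "S (Suc n) = 1 + S n * y" for n
    unfolding S_def sum.atMost_Suc_shift sumR by simp
  have Ssuc2: "S (Suc n) = S n + lpow y (Suc n)" for n
    unfolding S_def by simp
  have inc: "S n \<le> S (Suc n)" for n
  proof -
    have "S n + 0 \<le> S n + lpow y (Suc n)" using addmono lpow_nonneg[OF y0] by blast
    then show ?thesis using Ssuc2[of n] by simp
  qed
  have z0: "0 \<le> z" using z by simp
  have "z * x \<le> z * 1" using mult_lmono[OF z0 x1] .
  then have z1: "1 \<le> z" using z(2) by simp
  have zsplit: "z * x + z * y = z" using distL[of z x y] unfolding y_def by simp
  have bound: "S n \<le> z" for n
  proof (induction n)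
    case 0 then show ?case using S0 z1 by simp
  next
    case (Suc n)
    have "S n * y \<le> z * y" using mult_rmono[OF y0 Suc] .
    then have "1 + S n * y \<le> z * x + z * y" using add_mono2 z(2) by blast
    then show ?case using Ssuc zsplit by simp
  qed
  have "\<exists>s. is_lub (range S) s"
    using h2 unfolding mono_sigma_complete_def using inc bound by blast
  then obtain s where s: "is_lub (range S) s" by blast
  have Sle: "S n \<le> s" for n using s unfolding is_lub_def by blast
  have s1: "1 \<le> s" using Sle[of 0] S0 by simp
  have s0: "0 \<le> s" using s1 h1 by (rule order.trans[rotated])
  have sy0: "0 \<le> s * y" using pos[OF s0 y0] .
  have ub: "s \<le> s * y + 1"
  proof -
    have "S n \<le> s * y + 1" for n
    proof (cases n)
      case 0
      have "0 + 1 \<le> s * y + 1" using add_mono2[OF sy0, of 1 1] by simp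
      then show ?thesis using 0 S0 by simp
    next
      case (Suc m)
      have "S m * y \<le> s * y" using mult_rmono[OF y0 Sle] .
      then have "1 + S m * y \<le> 1 + s * y" by (rule addmono)
      then show ?thesis using Suc Ssuc by (simp add: add.commute)
    qed
    then show ?thesis using s unfolding is_lub_def by blast
  qed
  have sx: "s * x = s - s * y" unfolding xy diffL by simp
  have le1: "s * x \<le> 1"
  proof -
    have "0 \<le> s * y + 1 - s" using ub le_iff by blast
    moreover have "s * y + 1 - s = 1 - s * x" unfolding sx by (simp add: algebra_simps)
    ultimately show ?thesis using le_iff by auto
  qed
  have Sx: "S n * x = 1 - lpow y (Suc n)" for n
  proof -
    have "S n * x = S n - S n * y" unfolding xy diffL by simp
    also have "\<dots> = 1 - lpow y (Suc n)" using Ssuc[of n] Ssuc2[of n]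
      by (simp add: algebra_simps)
    finally show ?thesis .
  qed
  have x0': "0 \<le> x" using x0 .
  have lb: "1 - s * x \<le> lpow y k" for k
  proof (cases k)
    case 0
    have "0 \<le> s * x" using pos[OF s0 x0] .
    then have "0 \<le> 1 - (1 - s * x)" by simp
    then have "1 - s * x \<le> 1" using le_iff[of "1 - s * x" 1] by blast
    then show ?thesis using 0 by simp
  next
    case (Suc n)
    have "S n * x \<le> s * x" using mult_rmono[OF x0 Sle] .
    then have "0 \<le> s * x - S n * x" using le_iff by blast
    moreover have "s * x - S n * x = lpow y k - (1 - s * x)" using Sx[of n] Suc
      by (simp add: algebra_simps)
    ultimately show ?thesis using le_iff by auto
  qed
  then have "1 - s * x \<le> 0" using glb unfolding is_glb_def y_def by blast
  then have "0 \<le> 0 - (1 - s * x)" using le_iff by blast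
  then have "1 \<le> s * x" using le_iff by auto
  then have "s * x = 1" using le1 by simp
  then show ?thesis using s unfolding S_def y_def by blast
qed

lemma right_part:
  fixes x :: 'a
  assumes h2: "mono_sigma_complete TYPE('a)"
    and x0: "0 \<le> x" and x1: "x \<le> 1"
    and glb: "is_glb (range (rpow (1 - x))) 0"
    and z: "0 < z" "1 \<le> x * z"
  shows "\<exists>s. is_lub (range (\<lambda>n. \<Sum>k\<le>n. rpow (1 - x) k)) s \<and> x * s = 1"
proof -
  define y where "y = 1 - x"
  have xy: "x = 1 - y" unfolding y_def by simp
  have y0: "0 \<le> y" using x1 le_iff unfolding y_def by blast
  define S where "S n = (\<Sum>k\<le>n. rpow y k)" for n
  have S0: "S 0 = 1" unfolding S_def by simp
  have Ssuc: "S (Suc n) = 1 + y * S n" for n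
    unfolding S_def sum.atMost_Suc_shift sumL by simp
  have Ssuc2: "S (Suc n) = S n + rpow y (Suc n)" for n
    unfolding S_def by simp
  have inc: "S n \<le> S (Suc n)" for n
  proof -
    have "S n + 0 \<le> S n + rpow y (Suc n)" using addmono rpow_nonneg[OF y0] by blast
    then show ?thesis using Ssuc2[of n] by simp
  qed
  have z0: "0 \<le> z" using z by simp
  have "x * z \<le> 1 * z" using mult_rmono[OF z0 x1] .
  then have z1: "1 \<le> z" using z(2) by simp
  have zsplit: "x * z + y * z = z" using distR[of x y z] unfolding y_def by simp
  have bound: "S n \<le> z" for n
  proof (induction n)
    case 0 then show ?case using S0 z1 by simp
  next
    case (Suc n)
    have "y * S n \<le> y * z" using mult_lmono[OF y0 Suc] .
    then have "1 + y * S n \<le> x * z + y * z" using add_mono2 z(2) by blast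
    then show ?case using Ssuc zsplit by simp
  qed
  have "\<exists>s. is_lub (range S) s"
    using h2 unfolding mono_sigma_complete_def using inc bound by blast
  then obtain s where s: "is_lub (range S) s" by blast
  have Sle: "S n \<le> s" for n using s unfolding is_lub_def by blast
  have s1: "1 \<le> s" using Sle[of 0] S0 by simp
  have s0: "0 \<le> s" using s1 h1 by (rule order.trans[rotated])
  have sy0: "0 \<le> y * s" using pos[OF y0 s0] .
  have ub: "s \<le> y * s + 1"
  proof -
    have "S n \<le> y * s + 1" for n
    proof (cases n)
      case 0
      have "0 + 1 \<le> y * s + 1" using add_mono2[OF sy0, of 1 1] by simp
      then show ?thesis using 0 S0 by simp
    next
      case (Suc m)
      have "y * S m \<le> y * s" using mult_lmono[OF y0 Sle] .
      then have "1 + y * S m \<le> 1 + y * s" by (rule addmono)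
      then show ?thesis using Suc Ssuc by (simp add: add.commute)
    qed
    then show ?thesis using s unfolding is_lub_def by blast
  qed
  have sx: "x * s = s - y * s" unfolding xy diffR by simp
  have le1: "x * s \<le> 1"
  proof -
    have "0 \<le> y * s + 1 - s" using ub le_iff by blast
    moreover have "y * s + 1 - s = 1 - x * s" unfolding sx by (simp add: algebra_simps)
    ultimately show ?thesis using le_iff by auto
  qed
  have Sx: "x * S n = 1 - rpow y (Suc n)" for n
  proof -
    have "x * S n = S n - y * S n" unfolding xy diffR by simp
    also have "\<dots> = 1 - rpow y (Suc n)" using Ssuc[of n] Ssuc2[of n]
      by (simp add: algebra_simps)
    finally show ?thesis .
  qed
  have x0': "0 \<le> x" using x0 .
  have lb: "1 - x * s \<le> rpow y k" for k
  proof (cases k)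
    case 0
    have "0 \<le> x * s" using pos[OF x0 s0] .
    then have "0 \<le> 1 - (1 - x * s)" by simp
    then have "1 - x * s \<le> 1" using le_iff[of "1 - x * s" 1] by blast
    then show ?thesis using 0 by simp
  next
    case (Suc n)
    have "x * S n \<le> x * s" using mult_lmono[OF x0 Sle] .
    then have "0 \<le> x * s - x * S n" using le_iff by blast
    moreover have "x * s - x * S n = rpow y k - (1 - x * s)" using Sx[of n] Suc
      by (simp add: algebra_simps)
    ultimately show ?thesis using le_iff by auto
  qed
  then have "1 - x * s \<le> 0" using glb unfolding is_glb_def y_def by blast
  then have "0 \<le> 0 - (1 - x * s)" using le_iff by blast
  then have "1 \<le> x * s" using le_iff by auto
  then have "x * s = 1" using le1 by simp
  then show ?thesis using s unfolding S_def y_def by blast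
qed

end

theorem mainTheorem12:
  assumes ring: "po_unitary_ring TYPE('a::{ab_group_add,times,one,order})"
    and h1: "(0::'a) \<le> 1"
    and h2: "mono_sigma_complete TYPE('a)"
    and h3: "\<forall>x::'a. x \<in> {0<..1} \<longrightarrow> has_right_sup_almost_inverse x"
    and h4: "\<forall>x::'a. x \<in> {0<..1} \<longrightarrow> has_left_sup_almost_inverse x"
    and h5: "\<forall>x::'a. x \<in> {0..<1} \<longrightarrow> is_glb (range (rpow x)) 0"
    and h6: "\<forall>x::'a. x \<in> {0..<1} \<longrightarrow> is_glb (range (lpow x)) 0"
    and h7: "\<forall>x::'a. x \<in> {0<..<1} \<longrightarrow>
               (\<forall>l r. l * x = 1 \<longrightarrow> x * r = 1 \<longrightarrow> l = r)"
  shows "\<forall>x::'a. x \<in> {0<..1} \<longrightarrow>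
           (\<exists>s. is_lub (range (\<lambda>n. \<Sum>k\<le>n. lpow (1 - x) k)) s
              \<and> is_lub (range (\<lambda>n. \<Sum>k\<le>n. rpow (1 - x) k)) s
              \<and> s * x = 1 \<and> x * s = 1)"
proof (intro allI impI)
  fix x :: 'a
  assume xr: "x \<in> {0<..1}"
  have P: "por TYPE('a)" unfolding por_def using ring h1 by blast
  have x0: "0 \<le> x" and x1: "x \<le> 1" and xpos: "0 < x" using xr by auto
  have y0: "0 \<le> 1 - x" using x1 por.le_iff[OF P] by blast
  have ylt: "1 - x < 1"
  proof -
    have "1 - x \<le> 1" using x0 por.le_iff[OF P, of "1 - x" 1] by simp
    moreover have "1 - x \<noteq> 1" using xpos by auto
    ultimately show ?thesis by (simp add: order_less_le)
  qed
  have yr: "1 - x \<in> {0..<1}" using y0 ylt by simp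
  obtain z where z: "0 < z" "1 \<le> z * x"
    using h4 xr unfolding has_left_sup_almost_inverse_def by blast
  obtain w where w: "0 < w" "1 \<le> x * w"
    using h3 xr unfolding has_right_sup_almost_inverse_def by blast
  obtain s where s: "is_lub (range (\<lambda>n. \<Sum>k\<le>n. lpow (1 - x) k)) s" "s * x = 1"
    using por.left_part[OF P h2 x0 x1 _ z] h6 yr by blast
  obtain t where t: "is_lub (range (\<lambda>n. \<Sum>k\<le>n. rpow (1 - x) k)) t" "x * t = 1"
    using por.right_part[OF P h2 x0 x1 _ w] h5 yr by blast
  have st: "s = t"
  proof (cases "x = 1")
    case True
    then show ?thesis using s(2) t(2) por.one_r[OF P] por.one_l[OF P] by simp
  next
    case False
    then have "x \<in> {0<..<1}" using xr by auto
    then show ?thesis using h7 s(2) t(2) by blast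
  qed
  show "\<exists>s. is_lub (range (\<lambda>n. \<Sum>k\<le>n. lpow (1 - x) k)) s
              \<and> is_lub (range (\<lambda>n. \<Sum>k\<le>n. rpow (1 - x) k)) s
              \<and> s * x = 1 \<and> x * s = 1"
    using s t st by blast
qed

end
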